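(* For any connected component $\gamma$ of $V_{reg,\Delta}$, the elements $A_\gamma(\sigma)=[C(\sigma)'_\gamma]$, $\sigma\in{\cal B}(\Delta)$, satisfy the relations $$A_\gamma(\sigma)=\sum_{\beta\in\sigma,\ c_{\alpha\beta}\ne0}\operatorname{sign}(c_{\alpha\beta})\,A_\gamma(\sigma\cup\{\alpha\}\setminus\{\beta\})$$ in the quotient group ${\cal C}_\Delta/{\cal LC}_\Delta$. Here $\sigma\in{\cal B}(\Delta)$ and $\alpha\in\Delta\setminus\sigma$ are arbitrary, and $\alpha=\sum_{\beta\in\sigma}c_{\alpha\beta}\beta$.
   Context: Let $V$ be a real vector space of dimension $r$, and $\Delta\subset V\setminus\{0\}$ finite, spanning $V$, with $\Delta=-\Delta$. ${\cal B}(\Delta)$ is the set of subsets of $\Delta$ forming a basis of $V$. Walls are hyperplanes spanned by $r-1$ linearly independent elements of $\Delta$, and $V_{reg,\Delta}$ is the complement of their union. For $A\subset V$, $[A]$ is its characteristic function. A polyhedral cone is $C(h_1,\dots,h_n)=\{\sum t_ih_i:t_i\ge0\}$; $C(\emptyset)=\{0\}$, and $C^0$ denotes the relative interior of $C$. ${\cal C}(V)$ is the additive group of $\mathbb Z$-valued functions on $V$ generated by characteristic functions of polyhedral cones. ${\cal C}_\Delta$ is its subgroup generated by the $[C(\kappa)]$ with $\kappa\subset\Delta$, and ${\cal LC}_\Delta$ is the subgroup generated by those $[C(\kappa)]$, $\kappa\subset\Delta$, for which $C(\kappa)$ contains a line. For $\sigma\in{\cal B}(\Delta)$ and $p=\sum_{\alpha\in\sigma}p_\alpha\alpha\in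 V_{reg,\Delta}$ (so all $p_\alpha\ne0$), set $$C(\sigma)'_p=C(\{\alpha\in\sigma:p_\alpha>0\})+C(\{\alpha\in\sigma:p_\alpha<0\})^0=\Big\{\sum_{\alpha\in\sigma}t_\alpha\alpha:\ t_\alpha\ge0\text{ if }p_\alpha>0,\ t_\alpha>0\text{ if }p_\alpha<0\Big\}.$$ This depends only on the connected component $\gamma$ of $V_{reg,\Delta}$ containing $p$, and is denoted $C(\sigma)'_\gamma$; its characteristic function lies in ${\cal C}_\Delta$. *)

theory Defs
  imports "HOL-Analysis.Analysis"
begin

text \<open>V is modelled by a Euclidean space type 'a, r = DIM('a).\<close>

definition bases :: "'a::euclidean_space set \<Rightarrow> 'a set set" where
  "bases \<Delta> = {\<sigma>. \<sigma> \<subseteq> \<Delta> \<and> independent \<sigma> \<and> span \<sigma> = UNIV}"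

definition walls :: "'a::euclidean_space set \<Rightarrow> 'a set set" where
  "walls \<Delta> = {span S | S. S \<subseteq> \<Delta> \<and> independent S \<and> card S = DIM('a) - 1}"

definition Vreg :: "'a::euclidean_space set \<Rightarrow> 'a set" where
  "Vreg \<Delta> = UNIV - \<Union>(walls \<Delta>)"

definition pcone :: "'a::real_vector set \<Rightarrow> 'a set" where
  "pcone \<kappa> = {(\<Sum>x\<in>\<kappa>. t x *\<^sub>R x) | t. \<forall>x\<in>\<kappa>. t x \<ge> 0}"

definition contains_line :: "'a::real_vector set \<Rightarrow> bool" where
  "contains_line C \<longleftrightarrow> (\<exists>x v. v \<noteq> 0 \<and> (\<forall>t::real. x + t *\<^sub>R v \<in> C))"

definition cone_p :: "'a::euclidean_space set \<Rightarrow> 'a \<Rightarrow> 'a set" where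
  "cone_p \<sigma> p = {(\<Sum>a\<in>\<sigma>. t a *\<^sub>R a) | t.
      \<forall>a\<in>\<sigma>. (representation \<sigma> p a > 0 \<longrightarrow> t a \<ge> 0) \<and>
              (representation \<sigma> p a < 0 \<longrightarrow> t a > 0)}"

definition cone_gamma :: "'a::euclidean_space set \<Rightarrow> 'a set \<Rightarrow> 'a set" where
  "cone_gamma \<sigma> \<gamma> = cone_p \<sigma> (SOME p. p \<in> \<gamma>)"

definition A_gamma :: "'a::euclidean_space set \<Rightarrow> 'a set \<Rightarrow> 'a \<Rightarrow> int" where
  "A_gamma \<gamma> \<sigma> = indicator (cone_gamma \<sigma> \<gamma>)"

definition LC :: "'a::euclidean_space set \<Rightarrow> ('a \<Rightarrow> int) set" where
  "LC \<Delta> = {(\<lambda>v. \<Sum>\<kappa>\<in>{\<kappa>. \<kappa> \<subseteq> \<Delta> \<and> contains_line (pcone \<kappa>)}.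
                    n \<kappa> * indicator (pcone \<kappa>) v) | n. True}"

definition sign_int :: "real \<Rightarrow> int" where
  "sign_int c = (if c > 0 then 1 else if c < 0 then -1 else 0)"

end

theory Submission
  imports Defs
begin


lemma rep_sum_eq:
  fixes B :: "'a::euclidean_space set"
  assumes "finite B" "independent B" "x \<in> B"
  shows "representation B (\<Sum>b\<in>B. g b *\<^sub>R b) x = g x"
proof -
  have "representation B (\<Sum>b\<in>B. g b *\<^sub>R b) x = (\<Sum>b\<in>B. representation B (g b *\<^sub>R b) x)"
    using assms by (subst representation_sum) (auto intro: span_base span_scale)
  also have "\<dots> = (\<Sum>b\<in>B. g b * (if x = b then 1 else 0))"
    using assms by (intro sum.cong refl) (simp add: representation_scale span_base representation_basis)
  also have "\<dots> = (\<Sum>b\<in>B. if b = x then g b else 0)" by (intro sum.cong) auto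
  also have "\<dots> = g x" using assms by simp
  finally show ?thesis .
qed

lemma bases_facts:
  fixes \<sigma> :: "'a::euclidean_space set"
  assumes "\<sigma> \<in> bases \<Delta>" "finite \<Delta>"
  shows "finite \<sigma>" "independent \<sigma>" "span \<sigma> = UNIV" "card \<sigma> = DIM('a)" "\<sigma> \<subseteq> \<Delta>"
proof -
  show f: "finite \<sigma>" using assms by (auto simp: bases_def intro: finite_subset)
  show i: "independent \<sigma>" "span \<sigma> = UNIV" "\<sigma> \<subseteq> \<Delta>" using assms by (auto simp: bases_def)
  then show "card \<sigma> = DIM('a)"
    using basis_card_eq_dim[of \<sigma> UNIV] by simp
qed

lemma rep_expand:
  fixes B :: "'a::euclidean_space set"
  assumes "finite B" "independent B" "span B = UNIV"
  shows "(\<Sum>b\<in>B. representation B v b *\<^sub>R b) = v"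
  using assms by (intro sum_representation_eq) auto

lemma rep_nonzero:
  fixes \<sigma> :: "'a::euclidean_space set"
  assumes "\<sigma> \<in> bases \<Delta>" "finite \<Delta>" "p \<in> Vreg \<Delta>" "a \<in> \<sigma>"
  shows "representation \<sigma> p a \<noteq> 0"
proof
  assume z: "representation \<sigma> p a = 0"
  note bf = bases_facts[OF assms(1,2)]
  have "p = (\<Sum>b\<in>\<sigma>. representation \<sigma> p b *\<^sub>R b)" using rep_expand[OF bf(1-3)] by simp
  also have "\<dots> = (\<Sum>b\<in>\<sigma>-{a}. representation \<sigma> p b *\<^sub>R b)"
    using z bf(1) assms(4) by (subst sum.remove[of _ a]) auto
  finally have pe: "p = (\<Sum>b\<in>\<sigma>-{a}. representation \<sigma> p b *\<^sub>R b)" .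
  have "(\<Sum>b\<in>\<sigma>-{a}. representation \<sigma> p b *\<^sub>R b) \<in> span (\<sigma> - {a})"
    by (intro span_sum span_scale span_base)
  then have "p \<in> span (\<sigma> - {a})" using pe by simp
  moreover have "independent (\<sigma> - {a})" using dependent_mono[of "\<sigma>-{a}" \<sigma>] bf(2) by blast
  moreover have "span (\<sigma> - {a}) \<in> walls \<Delta>"
    unfolding walls_def using bf assms(4) calculation(2)
    by (intro CollectI exI[of _ "\<sigma> - {a}"]) auto
  ultimately show False using assms(3) by (auto simp: Vreg_def)
qed

lemma cone_p_iff:
  fixes \<sigma> :: "'a::euclidean_space set"
  assumes "finite \<sigma>" "independent \<sigma>" "span \<sigma> = UNIV"
  shows "v \<in> cone_p \<sigma> p \<longleftrightarrow> (\<forall>a\<in>\<sigma>. (representation \<sigma> p a > 0 \<longrightarrow> representation \<sigma> v a \<ge> 0) \<and>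
              (representation \<sigma> p a < 0 \<longrightarrow> representation \<sigma> v a > 0))"
proof
  assume "v \<in> cone_p \<sigma> p"
  then obtain t where v: "v = (\<Sum>a\<in>\<sigma>. t a *\<^sub>R a)" and t: "\<forall>a\<in>\<sigma>. (representation \<sigma> p a > 0 \<longrightarrow> t a \<ge> 0) \<and>
              (representation \<sigma> p a < 0 \<longrightarrow> t a > 0)" unfolding cone_p_def by blast
  have "\<forall>a\<in>\<sigma>. representation \<sigma> v a = t a" using rep_sum_eq assms v by blast
  then show "(\<forall>a\<in>\<sigma>. (representation \<sigma> p a > 0 \<longrightarrow> representation \<sigma> v a \<ge> 0) \<and>
              (representation \<sigma> p a < 0 \<longrightarrow> representation \<sigma> v a > 0))" using t by auto
next
  assume h: "(\<forall>a\<in>\<sigma>. (representation \<sigma> p a > 0 \<longrightarrow> representation \<sigma> v a \<ge> 0) \<and>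
              (representation \<sigma> p a < 0 \<longrightarrow> representation \<sigma> v a > 0))"
  have "v = (\<Sum>a\<in>\<sigma>. representation \<sigma> v a *\<^sub>R a)" using rep_expand[OF assms] by simp
  then show "v \<in> cone_p \<sigma> p" unfolding cone_p_def using h by blast
qed

definition lam :: "'a::euclidean_space set \<Rightarrow> 'a \<Rightarrow> 'a \<Rightarrow> real" where
  "lam \<sigma> \<alpha> x = representation \<sigma> \<alpha> x - (if x = \<alpha> then 1 else 0)"

context
  fixes \<Delta> :: "'a::euclidean_space set" and \<sigma> \<alpha>
  assumes fin: "finite \<Delta>" and sig: "\<sigma> \<in> bases \<Delta>" and al: "\<alpha> \<in> \<Delta> - \<sigma>"
begin

lemma bf: "finite \<sigma>" "independent \<sigma>" "span \<sigma> = UNIV" "card \<sigma> = DIM('a)" "\<sigma> \<subseteq> \<Delta>"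
  using bases_facts[OF sig fin] by auto

lemma rep_al: "representation \<sigma> w \<alpha> = 0"
  using al representation_ne_zero by blast

lemma sum_tau: "(\<Sum>x\<in>insert \<alpha> \<sigma>. g x *\<^sub>R x) = g \<alpha> *\<^sub>R \<alpha> + (\<Sum>x\<in>\<sigma>. g x *\<^sub>R x)"
  using al bf(1) by (simp add: sum.insert)

lemma F3: "(\<Sum>x\<in>insert \<alpha> \<sigma>. representation \<sigma> w x *\<^sub>R x) = w"
  using sum_tau rep_al rep_expand[OF bf(1-3)] by simp

lemma lam_sig: "x \<in> \<sigma> \<Longrightarrow> lam \<sigma> \<alpha> x = representation \<sigma> \<alpha> x"
  using al by (auto simp: lam_def)

lemma lam_al: "lam \<sigma> \<alpha> \<alpha> = -1"
  using rep_al by (simp add: lam_def)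

lemma F2: "(\<Sum>x\<in>insert \<alpha> \<sigma>. lam \<sigma> \<alpha> x *\<^sub>R x) = 0"
proof -
  have "(\<Sum>x\<in>\<sigma>. lam \<sigma> \<alpha> x *\<^sub>R x) = (\<Sum>x\<in>\<sigma>. representation \<sigma> \<alpha> x *\<^sub>R x)"
    by (intro sum.cong) (auto simp: lam_sig)
  then show ?thesis using sum_tau lam_al rep_expand[OF bf(1-3)] by simp
qed

lemma F4:
  assumes "(\<Sum>x\<in>insert \<alpha> \<sigma>. g x *\<^sub>R x) = w" "x \<in> \<sigma>"
  shows "representation \<sigma> w x = g x + g \<alpha> * representation \<sigma> \<alpha> x"
proof -
  define h where "h x = g x + g \<alpha> * lam \<sigma> \<alpha> x" for x
  have "(\<Sum>x\<in>insert \<alpha> \<sigma>. h x *\<^sub>R x) = (\<Sum>x\<in>insert \<alpha> \<sigma>. g x *\<^sub>R x) + g \<alpha> *\<^sub>R (\<Sum>x\<in>insert \<alpha> \<sigma>. lam \<sigma> \<alpha> x *\<^sub>R x)"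
    by (simp add: h_def scaleR_add_left sum.distrib scaleR_sum_right)
  also have "\<dots> = w" using assms F2 by simp
  finally have "w = (\<Sum>x\<in>\<sigma>. h x *\<^sub>R x)" using sum_tau[of h] lam_al by (simp add: h_def)
  then have "representation \<sigma> w x = h x" using rep_sum_eq[OF bf(1,2) assms(2), of h] by simp
  then show ?thesis using assms(2) by (simp add: h_def lam_sig)
qed

lemma F5:
  assumes "y \<in> insert \<alpha> \<sigma>" "lam \<sigma> \<alpha> y \<noteq> 0"
  shows "insert \<alpha> \<sigma> - {y} \<in> bases \<Delta>"
proof (cases "y = \<alpha>")
  case True
  then show ?thesis using sig al by simp
next
  case False
  with assms have y: "y \<in> \<sigma>" by auto
  let ?s = "insert \<alpha> \<sigma> - {y}"
  have fs: "finite ?s" using bf by simp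
  have "0 = (\<Sum>x\<in>insert \<alpha> \<sigma>. lam \<sigma> \<alpha> x *\<^sub>R x)" using F2 by simp
  also have "\<dots> = lam \<sigma> \<alpha> y *\<^sub>R y + (\<Sum>x\<in>?s. lam \<sigma> \<alpha> x *\<^sub>R x)"
    using assms(1) bf(1) by (subst sum.remove[of _ y]) auto
  finally have e: "lam \<sigma> \<alpha> y *\<^sub>R y = - (\<Sum>x\<in>?s. lam \<sigma> \<alpha> x *\<^sub>R x)"
    by (simp add: eq_neg_iff_add_eq_0)
  have "y = (1 / lam \<sigma> \<alpha> y) *\<^sub>R (lam \<sigma> \<alpha> y *\<^sub>R y)" using assms(2) by simp
  also have "\<dots> = (- 1 / lam \<sigma> \<alpha> y) *\<^sub>R (\<Sum>x\<in>?s. lam \<sigma> \<alpha> x *\<^sub>R x)" unfolding e by simp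
  finally have "y = (- 1 / lam \<sigma> \<alpha> y) *\<^sub>R (\<Sum>x\<in>?s. lam \<sigma> \<alpha> x *\<^sub>R x)" .
  moreover have "(- 1 / lam \<sigma> \<alpha> y) *\<^sub>R (\<Sum>x\<in>?s. lam \<sigma> \<alpha> x *\<^sub>R x) \<in> span ?s"
    by (intro span_sum span_scale span_base)
  ultimately have "y \<in> span ?s" by simp
  then have "\<sigma> \<subseteq> span ?s" using span_base[of _ ?s] by blast
  then have "span \<sigma> \<subseteq> span ?s" by (simp add: span_minimal subspace_span)
  then have sp: "span ?s = UNIV" using bf by auto
  have cs: "card ?s = card \<sigma>" using y al bf(1) False
    by (simp add: card_insert_if card_Diff_singleton_if)
  have "independent ?s" using card_le_dim_spanning[of ?s UNIV] fs sp cs bf(4) by simp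
  then show ?thesis using sp bf(5) al by (auto simp: bases_def)
qed

lemma F6:
  assumes "y \<in> insert \<alpha> \<sigma>" "lam \<sigma> \<alpha> y \<noteq> 0" "x \<in> insert \<alpha> \<sigma> - {y}"
  shows "representation (insert \<alpha> \<sigma> - {y}) w x
     = representation \<sigma> w x - (representation \<sigma> w y / lam \<sigma> \<alpha> y) * lam \<sigma> \<alpha> x"
proof -
  let ?s = "insert \<alpha> \<sigma> - {y}"
  define g where "g x = representation \<sigma> w x - (representation \<sigma> w y / lam \<sigma> \<alpha> y) * lam \<sigma> \<alpha> x" for x
  have "(\<Sum>x\<in>insert \<alpha> \<sigma>. g x *\<^sub>R x) = (\<Sum>x\<in>insert \<alpha> \<sigma>. representation \<sigma> w x *\<^sub>R x)
     - (representation \<sigma> w y / lam \<sigma> \<alpha> y) *\<^sub>R (\<Sum>x\<in>insert \<alpha> \<sigma>. lam \<sigma> \<alpha> x *\<^sub>R x)"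
    by (simp add: g_def scaleR_diff_left sum_subtractf scaleR_sum_right)
  also have "\<dots> = w" using F2 F3 by simp
  also have "(\<Sum>x\<in>insert \<alpha> \<sigma>. g x *\<^sub>R x) = g y *\<^sub>R y + (\<Sum>x\<in>?s. g x *\<^sub>R x)"
    using assms(1) bf(1) by (subst sum.remove[of _ y]) auto
  also have "g y = 0" using assms(2) by (simp add: g_def)
  finally have "w = (\<Sum>x\<in>?s. g x *\<^sub>R x)" by simp
  moreover note bases_facts[OF F5[OF assms(1,2)] fin]
  ultimately have "representation ?s w x = g x" using rep_sum_eq[of ?s x g] assms(3) by simp
  then show ?thesis by (simp add: g_def)
qed

end





lemma lex_key:
  fixes l a b A1 A2 B1 B2 :: real
  assumes "l \<noteq> 0" "a = l * (A1 - A2)" "b = l * (B1 - B2)" "b \<noteq> 0"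
  shows "((b > 0 \<longrightarrow> a \<ge> 0) \<and> (b < 0 \<longrightarrow> a > 0)) \<longleftrightarrow>
     (l > 0 \<longrightarrow> (-A1 < -A2 \<or> (-A1 = -A2 \<and> -B1 < -B2))) \<and> (l < 0 \<longrightarrow> (-A2 < -A1 \<or> (-A2 = -A1 \<and> -B2 < -B1)))"
proof (cases "l > 0")
  case True
  then show ?thesis using assms by (auto simp: zero_less_mult_iff zero_le_mult_iff mult_less_0_iff)
next
  case False
  then have "l < 0" using assms(1) by simp
  then show ?thesis using assms by (auto simp: zero_less_mult_iff zero_le_mult_iff mult_less_0_iff)
qed



typedef lexp = "UNIV :: (real \<times> real) set" by simp

instantiation lexp :: linorder
begin
definition less_eq_lexp :: "lexp \<Rightarrow> lexp \<Rightarrow> bool" where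
  "less_eq_lexp a b \<longleftrightarrow> fst (Rep_lexp a) < fst (Rep_lexp b) \<or>
     (fst (Rep_lexp a) = fst (Rep_lexp b) \<and> snd (Rep_lexp a) \<le> snd (Rep_lexp b))"
definition less_lexp :: "lexp \<Rightarrow> lexp \<Rightarrow> bool" where
  "less_lexp a b \<longleftrightarrow> fst (Rep_lexp a) < fst (Rep_lexp b) \<or>
     (fst (Rep_lexp a) = fst (Rep_lexp b) \<and> snd (Rep_lexp a) < snd (Rep_lexp b))"
instance
proof
  fix x y z :: lexp
  show "(x < y) = (x \<le> y \<and> \<not> y \<le> x)" by (auto simp: less_eq_lexp_def less_lexp_def)
  show "x \<le> x" by (auto simp: less_eq_lexp_def)
  show "x \<le> y \<Longrightarrow> y \<le> z \<Longrightarrow> x \<le> z" by (auto simp: less_eq_lexp_def)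
  show "x \<le> y \<Longrightarrow> y \<le> x \<Longrightarrow> x = y"
    by (auto simp: less_eq_lexp_def Rep_lexp_inject[symmetric] prod_eq_iff)
  show "x \<le> y \<or> y \<le> x" by (auto simp: less_eq_lexp_def)
qed
end

lemma lexp_less: "Abs_lexp (a, b) < Abs_lexp (c, d) \<longleftrightarrow> a < c \<or> (a = c \<and> b < d)"
  by (simp add: less_lexp_def Abs_lexp_inverse)

lemma lexp_eq: "Abs_lexp (a, b) = Abs_lexp (c, d) \<longleftrightarrow> a = c \<and> b = d"
  by (simp add: Abs_lexp_inject)

lemma comb:
  fixes z :: "'x \<Rightarrow> 'b::linorder" and l :: "'x \<Rightarrow> real"
  assumes fS: "finite S" and inj: "inj_on z S" and nz: "\<forall>x\<in>S. l x \<noteq> 0" and aS: "a \<in> S" and la: "l a < 0"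
  shows "(\<Sum>y\<in>S. sign_int (l y) * (if (\<forall>x\<in>S-{y}. (l x > 0 \<longrightarrow> z x < z y) \<and> (l x < 0 \<longrightarrow> z y < z x)) then 1 else 0))
       = - (if \<forall>x\<in>S. l x < 0 then 1 else 0)"
proof -
  define crit where "crit y \<longleftrightarrow> (\<forall>x\<in>S-{y}. (l x > 0 \<longrightarrow> z x < z y) \<and> (l x < 0 \<longrightarrow> z y < z x))" for y
  define P where "P = {x\<in>S. l x > 0}"
  define N where "N = {x\<in>S. l x < 0}"
  have SPN: "S = P \<union> N" "P \<inter> N = {}" using nz by (auto simp: P_def N_def)
  have fP: "finite P" and fN: "finite N" using fS by (auto simp: P_def N_def)
  have "a \<in> N" using aS la by (simp add: N_def)
  then have Nne: "N \<noteq> {}" by auto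
  have "Min (z ` N) \<in> z ` N" using fN Nne by simp
  then obtain yN where yN: "yN \<in> N" "z yN = Min (z ` N)" by auto
  have yNS: "yN \<in> S" using yN(1) by (simp add: N_def)
  have minN: "x \<in> N \<Longrightarrow> z yN \<le> z x" for x using yN fN by simp
  have injN: "x \<in> S \<Longrightarrow> y \<in> S \<Longrightarrow> z x = z y \<Longrightarrow> x = y" for x y using inj by (auto dest: inj_onD)
  have sum_split: "(\<Sum>y\<in>S. sign_int (l y) * (if crit y then 1 else 0))
      = (\<Sum>y\<in>P. (if crit y then 1 else 0)) - (\<Sum>y\<in>N. (if crit y then 1 else 0))"
  proof -
    have "(\<Sum>y\<in>S. sign_int (l y) * (if crit y then 1 else 0)) =
       (\<Sum>y\<in>P. sign_int (l y) * (if crit y then 1 else 0)) + (\<Sum>y\<in>N. sign_int (l y) * (if crit y then 1 else 0))"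
      unfolding SPN(1) using fP fN SPN(2) by (rule sum.union_disjoint)
    also have "(\<Sum>y\<in>P. sign_int (l y) * (if crit y then 1 else 0)) = (\<Sum>y\<in>P. (if crit y then 1 else 0))"
      by (intro sum.cong) (auto simp: P_def sign_int_def)
    also have "(\<Sum>y\<in>N. sign_int (l y) * (if crit y then 1 else 0)) = - (\<Sum>y\<in>N. (if crit y then 1 else 0))"
      by (subst sum_negf[symmetric], intro sum.cong) (auto simp: N_def sign_int_def)
    finally show ?thesis by simp
  qed
  show ?thesis
  proof (cases "P = {}")
    case True
    then have allneg: "\<forall>x\<in>S. l x < 0" using SPN by (auto simp: N_def)
    have "crit y \<longleftrightarrow> y = yN" if "y \<in> N" for y
    proof
      assume "crit y"
      show "y = yN"
      proof (rule ccontr)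
        assume "y \<noteq> yN"
        then have "z y < z yN" using \<open>crit y\<close> yN by (auto simp: crit_def N_def)
        with minN[OF that] show False by simp
      qed
    next
      assume "y = yN"
      show "crit y" unfolding crit_def
      proof
        fix x assume x: "x \<in> S - {y}"
        then have "x \<in> N" using True SPN by auto
        then have "z yN \<le> z x" by (rule minN)
        moreover have "z yN \<noteq> z x" using injN[OF yNS, of x] x \<open>y = yN\<close> by auto
        ultimately show "(l x > 0 \<longrightarrow> z x < z y) \<and> (l x < 0 \<longrightarrow> z y < z x)" using \<open>y = yN\<close> \<open>x \<in> N\<close> by (auto simp: N_def)
      qed
    qed
    then have "(\<Sum>y\<in>N. (if crit y then 1 else 0)) = (\<Sum>y\<in>N. (if y = yN then 1 else 0::int))"
      by (intro sum.cong) auto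
    also have "\<dots> = 1" using yN(1) fN by simp
    finally show ?thesis using sum_split True allneg unfolding crit_def by simp
  next
    case False
    have "Max (z ` P) \<in> z ` P" using fP False by simp
    then obtain yP where yP: "yP \<in> P" "z yP = Max (z ` P)" by auto
    have yPS: "yP \<in> S" using yP(1) by (simp add: P_def)
    have maxP: "x \<in> P \<Longrightarrow> z x \<le> z yP" for x using yP fP by simp
    define Q where "Q \<longleftrightarrow> z yP < z yN"
    have cP: "crit y \<longleftrightarrow> y = yP \<and> Q" if "y \<in> P" for y
    proof
      assume c: "crit y"
      have "y = yP"
      proof (rule ccontr)
        assume "y \<noteq> yP"
        then have "z yP < z y" using c yP by (auto simp: crit_def P_def)
        with maxP[OF that] show False by simp
      qed
      moreover have "z y < z yN" using c yN that by (auto simp: crit_def N_def P_def)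
      ultimately show "y = yP \<and> Q" by (simp add: Q_def)
    next
      assume h: "y = yP \<and> Q"
      show "crit y" unfolding crit_def
      proof
        fix x assume x: "x \<in> S - {y}"
        show "(l x > 0 \<longrightarrow> z x < z y) \<and> (l x < 0 \<longrightarrow> z y < z x)"
        proof (cases "l x > 0")
          case True
          then have "x \<in> P" using x by (simp add: P_def)
          then have "z x \<le> z yP" by (rule maxP)
          moreover have "z yP \<noteq> z x" using injN[OF yPS, of x] x h by auto
          ultimately show ?thesis using h True by auto
        next
          case False
          then have "x \<in> N" using x nz by (auto simp: N_def)
          then have "z yN \<le> z x" by (rule minN)
          then show ?thesis using h False by (auto simp: Q_def)
        qed
      qed
    qed
    have cN: "crit y \<longleftrightarrow> y = yN \<and> Q" if "y \<in> N" for y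
    proof
      assume c: "crit y"
      have "y = yN"
      proof (rule ccontr)
        assume "y \<noteq> yN"
        then have "z y < z yN" using c yN by (auto simp: crit_def N_def)
        with minN[OF that] show False by simp
      qed
      moreover have "z yP < z y" using c yP that by (auto simp: crit_def N_def P_def)
      ultimately show "y = yN \<and> Q" by (simp add: Q_def)
    next
      assume h: "y = yN \<and> Q"
      show "crit y" unfolding crit_def
      proof
        fix x assume x: "x \<in> S - {y}"
        show "(l x > 0 \<longrightarrow> z x < z y) \<and> (l x < 0 \<longrightarrow> z y < z x)"
        proof (cases "l x > 0")
          case True
          then have "x \<in> P" using x by (simp add: P_def)
          then have "z x \<le> z yP" by (rule maxP)
          then show ?thesis using h True by (auto simp: Q_def)
        next
          case False
          then have "x \<in> N" using x nz by (auto simp: N_def)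
          then have "z yN \<le> z x" by (rule minN)
          moreover have "z yN \<noteq> z x" using injN[OF yNS, of x] x h by auto
          ultimately show ?thesis using h False by auto
        qed
      qed
    qed
    have "(\<Sum>y\<in>P. (if crit y then 1 else 0)) = (\<Sum>y\<in>P. (if y = yP then (if Q then 1 else 0) else 0::int))"
      by (intro sum.cong) (auto simp: cP)
    also have "\<dots> = (if Q then 1 else 0)" using yP(1) fP by simp
    finally have e1: "(\<Sum>y\<in>P. (if crit y then 1 else 0)) = (if Q then 1 else (0::int))" .
    have "(\<Sum>y\<in>N. (if crit y then 1 else 0)) = (\<Sum>y\<in>N. (if y = yN then (if Q then 1 else 0) else 0::int))"
      by (intro sum.cong) (auto simp: cN)
    also have "\<dots> = (if Q then 1 else 0)" using yN(1) fN by simp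
    finally have e2: "(\<Sum>y\<in>N. (if crit y then 1 else 0)) = (if Q then 1 else (0::int))" .
    have "\<not> (\<forall>x\<in>S. l x < 0)" using False by (force simp: P_def)
    then show ?thesis using sum_split e1 e2 unfolding crit_def by simp
  qed
qed




definition zz where "zz \<sigma> \<alpha> p v x = Abs_lexp (-(representation \<sigma> v x / lam \<sigma> \<alpha> x), -(representation \<sigma> p x / lam \<sigma> \<alpha> x))"

definition Gc where "Gc \<sigma> \<alpha> p v \<longleftrightarrow> (\<forall>x\<in>\<sigma> - {\<beta>\<in>\<sigma>. representation \<sigma> \<alpha> \<beta> \<noteq> 0}.
   (representation \<sigma> p x > 0 \<longrightarrow> representation \<sigma> v x \<ge> 0) \<and> (representation \<sigma> p x < 0 \<longrightarrow> representation \<sigma> v x > 0))"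

definition critc where "critc \<sigma> \<alpha> p v y \<longleftrightarrow> (\<forall>x\<in>{y\<in>insert \<alpha> \<sigma>. lam \<sigma> \<alpha> y \<noteq> 0} - {y}.
   (lam \<sigma> \<alpha> x > 0 \<longrightarrow> zz \<sigma> \<alpha> p v x < zz \<sigma> \<alpha> p v y) \<and> (lam \<sigma> \<alpha> x < 0 \<longrightarrow> zz \<sigma> \<alpha> p v y < zz \<sigma> \<alpha> p v x))"

context
  fixes \<Delta> :: "'a::euclidean_space set" and \<sigma> \<alpha> p
  assumes fin: "finite \<Delta>" and sig: "\<sigma> \<in> bases \<Delta>" and al: "\<alpha> \<in> \<Delta> - \<sigma>" and preg: "p \<in> Vreg \<Delta>"
begin

lemma P1:
  assumes y: "y \<in> insert \<alpha> \<sigma>" "lam \<sigma> \<alpha> y \<noteq> 0"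
  shows "v \<in> cone_p (insert \<alpha> \<sigma> - {y}) p \<longleftrightarrow> Gc \<sigma> \<alpha> p v \<and> critc \<sigma> \<alpha> p v y"
proof -
  let ?s = "insert \<alpha> \<sigma> - {y}"
  let ?l = "lam \<sigma> \<alpha>" and ?t = "representation \<sigma> v" and ?q = "representation \<sigma> p"
  have B: "?s \<in> bases \<Delta>" using F5[OF fin sig al y] .
  note bs = bases_facts[OF B fin]
  have cone: "v \<in> cone_p ?s p \<longleftrightarrow> (\<forall>x\<in>?s. (representation ?s p x > 0 \<longrightarrow> representation ?s v x \<ge> 0) \<and>
              (representation ?s p x < 0 \<longrightarrow> representation ?s v x > 0))"
    using cone_p_iff[OF bs(1-3)] by blast
  have pt: "((representation ?s p x > 0 \<longrightarrow> representation ?s v x \<ge> 0) \<and>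
              (representation ?s p x < 0 \<longrightarrow> representation ?s v x > 0)) \<longleftrightarrow>
         (if ?l x = 0 then (?q x > 0 \<longrightarrow> ?t x \<ge> 0) \<and> (?q x < 0 \<longrightarrow> ?t x > 0)
          else (?l x > 0 \<longrightarrow> zz \<sigma> \<alpha> p v x < zz \<sigma> \<alpha> p v y) \<and> (?l x < 0 \<longrightarrow> zz \<sigma> \<alpha> p v y < zz \<sigma> \<alpha> p v x))"
    if x: "x \<in> ?s" for x
  proof -
    have rv: "representation ?s v x = ?t x - (?t y / ?l y) * ?l x" using F6[OF fin sig al y x] .
    have rp: "representation ?s p x = ?q x - (?q y / ?l y) * ?l x" using F6[OF fin sig al y x] .
    have nz: "representation ?s p x \<noteq> 0" using rep_nonzero[OF B fin preg x] .
    show ?thesis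
    proof (cases "?l x = 0")
      case True
      then show ?thesis using rv rp by simp
    next
      case False
      have a: "representation ?s v x = ?l x * (?t x / ?l x - ?t y / ?l y)"
        unfolding rv using False y(2) by (simp add: field_simps)
      have b: "representation ?s p x = ?l x * (?q x / ?l x - ?q y / ?l y)"
        unfolding rp using False y(2) by (simp add: field_simps)
      show ?thesis using lex_key[OF False a b nz] False
        by (simp add: zz_def lexp_less)
    qed
  qed
  have setx: "x \<in> ?s \<and> ?l x = 0 \<longleftrightarrow> x \<in> \<sigma> - {\<beta>\<in>\<sigma>. representation \<sigma> \<alpha> \<beta> \<noteq> 0}" for x
    using y lam_al[OF fin sig al] lam_sig[OF fin sig al, of x] al by auto
  have sety: "x \<in> ?s \<and> ?l x \<noteq> 0 \<longleftrightarrow> x \<in> {y\<in>insert \<alpha> \<sigma>. lam \<sigma> \<alpha> y \<noteq> 0} - {y}" for x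
    by auto
  show ?thesis
    unfolding cone Gc_def critc_def
  proof (rule iffI)
    assume h: "\<forall>x\<in>?s. (representation ?s p x > 0 \<longrightarrow> representation ?s v x \<ge> 0) \<and>
              (representation ?s p x < 0 \<longrightarrow> representation ?s v x > 0)"
    show "(\<forall>x\<in>\<sigma> - {\<beta>\<in>\<sigma>. representation \<sigma> \<alpha> \<beta> \<noteq> 0}. (?q x > 0 \<longrightarrow> ?t x \<ge> 0) \<and> (?q x < 0 \<longrightarrow> ?t x > 0)) \<and>
      (\<forall>x\<in>{y\<in>insert \<alpha> \<sigma>. lam \<sigma> \<alpha> y \<noteq> 0} - {y}. (?l x > 0 \<longrightarrow> zz \<sigma> \<alpha> p v x < zz \<sigma> \<alpha> p v y) \<and> (?l x < 0 \<longrightarrow> zz \<sigma> \<alpha> p v y < zz \<sigma> \<alpha> p v x))"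
    proof (rule conjI; intro ballI)
      fix x assume "x \<in> \<sigma> - {\<beta>\<in>\<sigma>. representation \<sigma> \<alpha> \<beta> \<noteq> 0}"
      then have "x \<in> ?s" "?l x = 0" using setx by blast+
      then show "(?q x > 0 \<longrightarrow> ?t x \<ge> 0) \<and> (?q x < 0 \<longrightarrow> ?t x > 0)" using h pt by auto
    next
      fix x assume "x \<in> {y\<in>insert \<alpha> \<sigma>. lam \<sigma> \<alpha> y \<noteq> 0} - {y}"
      then have "x \<in> ?s" "?l x \<noteq> 0" using sety by blast+
      then show "(?l x > 0 \<longrightarrow> zz \<sigma> \<alpha> p v x < zz \<sigma> \<alpha> p v y) \<and> (?l x < 0 \<longrightarrow> zz \<sigma> \<alpha> p v y < zz \<sigma> \<alpha> p v x)"
        using h pt by auto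
    qed
  next
    assume h: "(\<forall>x\<in>\<sigma> - {\<beta>\<in>\<sigma>. representation \<sigma> \<alpha> \<beta> \<noteq> 0}. (?q x > 0 \<longrightarrow> ?t x \<ge> 0) \<and> (?q x < 0 \<longrightarrow> ?t x > 0)) \<and>
      (\<forall>x\<in>{y\<in>insert \<alpha> \<sigma>. lam \<sigma> \<alpha> y \<noteq> 0} - {y}. (?l x > 0 \<longrightarrow> zz \<sigma> \<alpha> p v x < zz \<sigma> \<alpha> p v y) \<and> (?l x < 0 \<longrightarrow> zz \<sigma> \<alpha> p v y < zz \<sigma> \<alpha> p v x))"
    show "\<forall>x\<in>?s. (representation ?s p x > 0 \<longrightarrow> representation ?s v x \<ge> 0) \<and>
              (representation ?s p x < 0 \<longrightarrow> representation ?s v x > 0)"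
    proof
      fix x assume x: "x \<in> ?s"
      show "(representation ?s p x > 0 \<longrightarrow> representation ?s v x \<ge> 0) \<and>
              (representation ?s p x < 0 \<longrightarrow> representation ?s v x > 0)"
      proof (cases "?l x = 0")
        case True
        then have "x \<in> \<sigma> - {\<beta>\<in>\<sigma>. representation \<sigma> \<alpha> \<beta> \<noteq> 0}" using setx x by blast
        then show ?thesis using h pt[OF x] True by auto
      next
        case False
        then have "x \<in> {y\<in>insert \<alpha> \<sigma>. lam \<sigma> \<alpha> y \<noteq> 0} - {y}" using sety x by blast
        then show ?thesis using h pt[OF x] False by auto
      qed
    qed
  qed
qed

lemma P2: "inj_on (zz \<sigma> \<alpha> p v) {y\<in>insert \<alpha> \<sigma>. lam \<sigma> \<alpha> y \<noteq> 0}"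
proof (rule inj_onI)
  fix x y assume x: "x \<in> {y\<in>insert \<alpha> \<sigma>. lam \<sigma> \<alpha> y \<noteq> 0}" and y: "y \<in> {y\<in>insert \<alpha> \<sigma>. lam \<sigma> \<alpha> y \<noteq> 0}"
    and e: "zz \<sigma> \<alpha> p v x = zz \<sigma> \<alpha> p v y"
  show "x = y"
  proof (rule ccontr)
    assume ne: "x \<noteq> y"
    let ?s = "insert \<alpha> \<sigma> - {y}"
    have ys: "y \<in> insert \<alpha> \<sigma>" "lam \<sigma> \<alpha> y \<noteq> 0" using y by auto
    have xs: "x \<in> ?s" using x ne by auto
    have B: "?s \<in> bases \<Delta>" using F5[OF fin sig al ys] .
    have q: "representation \<sigma> p y / lam \<sigma> \<alpha> y = representation \<sigma> p x / lam \<sigma> \<alpha> x"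
      using e by (simp add: zz_def lexp_eq)
    have "representation ?s p x = representation \<sigma> p x - (representation \<sigma> p y / lam \<sigma> \<alpha> y) * lam \<sigma> \<alpha> x"
      using F6[OF fin sig al ys xs] .
    also have "\<dots> = 0" unfolding q using x by simp
    finally have "representation ?s p x = 0" .
    with rep_nonzero[OF B fin preg xs] show False by simp
  qed
qed

lemma P3:
  "indicator (cone_p \<sigma> p) v - (\<Sum>\<beta>\<in>{\<beta>\<in>\<sigma>. representation \<sigma> \<alpha> \<beta> \<noteq> 0}.
      sign_int (representation \<sigma> \<alpha> \<beta>) * indicator (cone_p (insert \<alpha> \<sigma> - {\<beta>}) p) v)
   = (if Gc \<sigma> \<alpha> p v \<and> (\<forall>x\<in>{y\<in>insert \<alpha> \<sigma>. lam \<sigma> \<alpha> y \<noteq> 0}. lam \<sigma> \<alpha> x < 0) then 1 else (0::int))"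
proof -
  define S where "S = {y\<in>insert \<alpha> \<sigma>. lam \<sigma> \<alpha> y \<noteq> 0}"
  define S0 where "S0 = {\<beta>\<in>\<sigma>. representation \<sigma> \<alpha> \<beta> \<noteq> 0}"
  define ind where "ind y = (indicator (cone_p (insert \<alpha> \<sigma> - {y}) p) v :: int)" for y
  have la: "lam \<sigma> \<alpha> \<alpha> = -1" using lam_al[OF fin sig al] .
  have ls: "x \<in> \<sigma> \<Longrightarrow> lam \<sigma> \<alpha> x = representation \<sigma> \<alpha> x" for x using lam_sig[OF fin sig al] .
  have SS: "S = insert \<alpha> S0" using la ls by (auto simp: S_def S0_def)
  have aS0: "\<alpha> \<notin> S0" using al by (auto simp: S0_def)
  have fS: "finite S" using bases_facts[OF sig fin] by (simp add: S_def)
  then have fS0: "finite S0" using SS by simp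
  have sigeq: "insert \<alpha> \<sigma> - {\<alpha>} = \<sigma>" using al by auto
  have X: "ind y = (if Gc \<sigma> \<alpha> p v then 1 else 0) * (if critc \<sigma> \<alpha> p v y then 1 else 0)" if "y \<in> S" for y
    using P1[of y v] that by (auto simp: S_def ind_def indicator_def)
  have "(\<Sum>y\<in>S. sign_int (lam \<sigma> \<alpha> y) * ind y) = - ind \<alpha> + (\<Sum>\<beta>\<in>S0. sign_int (representation \<sigma> \<alpha> \<beta>) * ind \<beta>)"
  proof -
    have "(\<Sum>y\<in>S. sign_int (lam \<sigma> \<alpha> y) * ind y) = sign_int (lam \<sigma> \<alpha> \<alpha>) * ind \<alpha> + (\<Sum>y\<in>S0. sign_int (lam \<sigma> \<alpha> y) * ind y)"
      unfolding SS using fS0 aS0 by simp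
    also have "(\<Sum>y\<in>S0. sign_int (lam \<sigma> \<alpha> y) * ind y) = (\<Sum>\<beta>\<in>S0. sign_int (representation \<sigma> \<alpha> \<beta>) * ind \<beta>)"
      by (intro sum.cong) (auto simp: S0_def ls)
    finally show ?thesis using la by (simp add: sign_int_def)
  qed
  moreover have "(\<Sum>y\<in>S. sign_int (lam \<sigma> \<alpha> y) * ind y) =
      (if Gc \<sigma> \<alpha> p v then 1 else 0) * (\<Sum>y\<in>S. sign_int (lam \<sigma> \<alpha> y) * (if critc \<sigma> \<alpha> p v y then 1 else 0))"
    by (simp add: X sum_distrib_left mult.left_commute cong: sum.cong)
  moreover have "(\<Sum>y\<in>S. sign_int (lam \<sigma> \<alpha> y) * (if critc \<sigma> \<alpha> p v y then 1 else 0)) =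
      - (if \<forall>x\<in>S. lam \<sigma> \<alpha> x < 0 then 1 else 0)"
    unfolding critc_def S_def[symmetric]
    by (rule comb[OF fS _ _ _]) (use P2 la al in \<open>auto simp: S_def\<close>)
  ultimately have "ind \<alpha> - (\<Sum>\<beta>\<in>S0. sign_int (representation \<sigma> \<alpha> \<beta>) * ind \<beta>) =
     (if Gc \<sigma> \<alpha> p v then 1 else 0) * (if \<forall>x\<in>S. lam \<sigma> \<alpha> x < 0 then 1 else 0)"
    by simp
  then have "ind \<alpha> - (\<Sum>\<beta>\<in>S0. sign_int (representation \<sigma> \<alpha> \<beta>) * ind \<beta>) =
     (if Gc \<sigma> \<alpha> p v \<and> (\<forall>x\<in>S. lam \<sigma> \<alpha> x < 0) then 1 else 0)" by simp
  then show ?thesis unfolding ind_def sigeq S0_def S_def .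
qed

end



lemma alt_pow:
  assumes "finite Z"
  shows "(\<Sum>T\<in>Pow Z. (-1::int) ^ card T) = (if Z = {} then 1 else 0)"
  using assms
proof (induction Z rule: finite_induct)
  case empty
  then show ?case by simp
next
  case (insert a Z)
  have inj: "inj_on (insert a) (Pow Z)" using insert(2) by (auto simp: inj_on_def)
  have disj: "Pow Z \<inter> insert a ` Pow Z = {}" using insert(2) by auto
  have "(\<Sum>T\<in>Pow (insert a Z). (-1::int) ^ card T) =
      (\<Sum>T\<in>Pow Z. (-1::int) ^ card T) + (\<Sum>T\<in>insert a ` Pow Z. (-1::int) ^ card T)"
    unfolding Pow_insert using insert(1) disj by (intro sum.union_disjoint) auto
  also have "(\<Sum>T\<in>insert a ` Pow Z. (-1::int) ^ card T) = (\<Sum>T\<in>Pow Z. (-1::int) ^ card (insert a T))"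
    using inj by (simp add: sum.reindex)
  also have "\<dots> = (\<Sum>T\<in>Pow Z. - ((-1::int) ^ card T))"
  proof (intro sum.cong refl)
    fix T assume "T \<in> Pow Z"
    then have "finite T" "a \<notin> T" using insert(1,2) finite_subset by auto
    then show "(-1::int) ^ card (insert a T) = - ((-1) ^ card T)" by simp
  qed
  finally show ?case by (simp add: sum_negf)
qed

lemma LC_zero: "(\<lambda>v. 0) \<in> LC \<Delta>"
  unfolding LC_def by (rule CollectI, rule exI[of _ "\<lambda>_. 0"]) simp

lemma LC_add:
  assumes "f \<in> LC \<Delta>" "g \<in> LC \<Delta>" shows "(\<lambda>v. f v + g v) \<in> LC \<Delta>"
proof -
  obtain n where n: "f = (\<lambda>v. \<Sum>\<kappa>\<in>{\<kappa>. \<kappa> \<subseteq> \<Delta> \<and> contains_line (pcone \<kappa>)}. n \<kappa> * indicator (pcone \<kappa>) v)"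
    using assms(1) unfolding LC_def by blast
  obtain m where m: "g = (\<lambda>v. \<Sum>\<kappa>\<in>{\<kappa>. \<kappa> \<subseteq> \<Delta> \<and> contains_line (pcone \<kappa>)}. m \<kappa> * indicator (pcone \<kappa>) v)"
    using assms(2) unfolding LC_def by blast
  show ?thesis unfolding LC_def
    by (rule CollectI, rule exI[of _ "\<lambda>k. n k + m k"]) (simp add: n m sum.distrib distrib_right)
qed

lemma LC_scale:
  assumes "f \<in> LC \<Delta>" shows "(\<lambda>v. k * f v) \<in> LC \<Delta>"
proof -
  obtain n where n: "f = (\<lambda>v. \<Sum>\<kappa>\<in>{\<kappa>. \<kappa> \<subseteq> \<Delta> \<and> contains_line (pcone \<kappa>)}. n \<kappa> * indicator (pcone \<kappa>) v)"
    using assms(1) unfolding LC_def by blast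
  show ?thesis unfolding LC_def
    by (rule CollectI, rule exI[of _ "\<lambda>j. k * n j"]) (simp add: n sum_distrib_left mult.assoc)
qed

lemma LC_gen:
  assumes "finite \<Delta>" "\<kappa> \<subseteq> \<Delta>" "contains_line (pcone \<kappa>)"
  shows "(\<lambda>v. indicator (pcone \<kappa>) v) \<in> LC \<Delta>"
proof -
  have fin: "finite {\<kappa>. \<kappa> \<subseteq> \<Delta> \<and> contains_line (pcone \<kappa>)}" using assms(1) by simp
  have "(\<lambda>v. indicator (pcone \<kappa>) v :: int) = (\<lambda>v. \<Sum>\<kappa>'\<in>{\<kappa>. \<kappa> \<subseteq> \<Delta> \<and> contains_line (pcone \<kappa>)}.
      (if \<kappa>' = \<kappa> then 1 else 0) * indicator (pcone \<kappa>') v)"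
  proof
    fix v
    have "(\<Sum>\<kappa>'\<in>{\<kappa>. \<kappa> \<subseteq> \<Delta> \<and> contains_line (pcone \<kappa>)}. (if \<kappa>' = \<kappa> then 1 else 0) * (indicator (pcone \<kappa>') v::int))
       = (\<Sum>\<kappa>'\<in>{\<kappa>. \<kappa> \<subseteq> \<Delta> \<and> contains_line (pcone \<kappa>)}. (if \<kappa>' = \<kappa> then indicator (pcone \<kappa>') v else 0))"
      by (intro sum.cong) auto
    also have "\<dots> = indicator (pcone \<kappa>) v" using fin assms(2,3) by simp
    finally show "indicator (pcone \<kappa>) v = (\<Sum>\<kappa>'\<in>{\<kappa>. \<kappa> \<subseteq> \<Delta> \<and> contains_line (pcone \<kappa>)}.
      (if \<kappa>' = \<kappa> then 1 else 0) * (indicator (pcone \<kappa>') v::int))" by simp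
  qed
  then show ?thesis unfolding LC_def
    by (intro CollectI exI[of _ "\<lambda>\<kappa>'. if \<kappa>' = \<kappa> then 1 else 0"] conjI) simp_all
qed

lemma LC_sum:
  assumes "finite I" "\<And>i. i \<in> I \<Longrightarrow> f i \<in> LC \<Delta>"
  shows "(\<lambda>v. \<Sum>i\<in>I. f i v) \<in> LC \<Delta>"
  using assms
proof (induction I rule: finite_induct)
  case empty
  then show ?case using LC_zero by simp
next
  case (insert a I)
  then show ?case using LC_add[of "f a" \<Delta> "\<lambda>v. \<Sum>i\<in>I. f i v"] by simp
qed




context
  fixes \<Delta> :: "'a::euclidean_space set" and \<sigma> \<alpha>
  assumes fin: "finite \<Delta>" and sig: "\<sigma> \<in> bases \<Delta>" and al: "\<alpha> \<in> \<Delta> - \<sigma>"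
    and neg: "\<forall>\<beta>\<in>\<sigma>. representation \<sigma> \<alpha> \<beta> \<noteq> 0 \<longrightarrow> representation \<sigma> \<alpha> \<beta> < 0"
begin

lemma P4:
  assumes K: "K \<subseteq> \<sigma> - {\<beta>\<in>\<sigma>. representation \<sigma> \<alpha> \<beta> \<noteq> 0}"
  shows "v \<in> pcone (insert \<alpha> {\<beta>\<in>\<sigma>. representation \<sigma> \<alpha> \<beta> \<noteq> 0} \<union> K) \<longleftrightarrow>
    (\<forall>x\<in>K. representation \<sigma> v x \<ge> 0) \<and> (\<forall>x\<in>(\<sigma> - {\<beta>\<in>\<sigma>. representation \<sigma> \<alpha> \<beta> \<noteq> 0}) - K. representation \<sigma> v x = 0)"
proof -
  define S0 where "S0 = {\<beta>\<in>\<sigma>. representation \<sigma> \<alpha> \<beta> \<noteq> 0}"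
  define \<kappa> where "\<kappa> = insert \<alpha> S0 \<union> K"
  let ?c = "representation \<sigma> \<alpha>" and ?t = "representation \<sigma> v"
  have fs: "finite \<sigma>" using bases_facts[OF sig fin] by simp
  have ksub: "\<kappa> \<subseteq> insert \<alpha> \<sigma>" using K by (auto simp: \<kappa>_def S0_def)
  have ftau: "finite (insert \<alpha> \<sigma>)" using fs by simp
  have ls: "x \<in> \<sigma> \<Longrightarrow> lam \<sigma> \<alpha> x = ?c x" for x using lam_sig[OF fin sig al] .
  have la: "lam \<sigma> \<alpha> \<alpha> = -1" using lam_al[OF fin sig al] .
  have "v \<in> pcone \<kappa> \<longleftrightarrow> (\<forall>x\<in>K. ?t x \<ge> 0) \<and> (\<forall>x\<in>(\<sigma> - S0) - K. ?t x = 0)"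
  proof
    assume "v \<in> pcone \<kappa>"
    then obtain u where v: "v = (\<Sum>x\<in>\<kappa>. u x *\<^sub>R x)" and u: "\<forall>x\<in>\<kappa>. u x \<ge> 0"
      unfolding pcone_def by blast
    define g where "g x = (if x \<in> \<kappa> then u x else 0)" for x
    have "(\<Sum>x\<in>insert \<alpha> \<sigma>. g x *\<^sub>R x) = (\<Sum>x\<in>\<kappa>. g x *\<^sub>R x)"
      using ftau ksub by (intro sum.mono_neutral_right) (auto simp: g_def)
    also have "\<dots> = v" unfolding v by (intro sum.cong) (auto simp: g_def)
    finally have gs: "(\<Sum>x\<in>insert \<alpha> \<sigma>. g x *\<^sub>R x) = v" .
    have r: "x \<in> \<sigma> \<Longrightarrow> ?t x = g x + g \<alpha> * ?c x" for x using F4[OF fin sig al gs] by simp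
    show "(\<forall>x\<in>K. ?t x \<ge> 0) \<and> (\<forall>x\<in>(\<sigma> - S0) - K. ?t x = 0)"
    proof
      show "\<forall>x\<in>K. ?t x \<ge> 0"
      proof
        fix x assume x: "x \<in> K"
        then have "x \<in> \<sigma>" "?c x = 0" "x \<in> \<kappa>" using K by (auto simp: \<kappa>_def)
        then show "?t x \<ge> 0" using r u by (simp add: g_def)
      qed
      show "\<forall>x\<in>(\<sigma> - S0) - K. ?t x = 0"
      proof
        fix x assume x: "x \<in> (\<sigma> - S0) - K"
        then have "x \<in> \<sigma>" "?c x = 0" "x \<notin> \<kappa>" using al by (auto simp: \<kappa>_def S0_def)
        then show "?t x = 0" using r by (simp add: g_def)
      qed
    qed
  next
    assume h: "(\<forall>x\<in>K. ?t x \<ge> 0) \<and> (\<forall>x\<in>(\<sigma> - S0) - K. ?t x = 0)"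
    define M where "M = (\<Sum>x\<in>S0. \<bar>?t x\<bar> / \<bar>?c x\<bar>)"
    define u where "u x = ?t x - M * lam \<sigma> \<alpha> x" for x
    have fS0: "finite S0" using fs by (simp add: S0_def)
    have M0: "M \<ge> 0" unfolding M_def by (intro sum_nonneg) simp
    have "(\<Sum>x\<in>insert \<alpha> \<sigma>. u x *\<^sub>R x) = (\<Sum>x\<in>insert \<alpha> \<sigma>. ?t x *\<^sub>R x) - M *\<^sub>R (\<Sum>x\<in>insert \<alpha> \<sigma>. lam \<sigma> \<alpha> x *\<^sub>R x)"
      by (simp add: u_def scaleR_diff_left sum_subtractf scaleR_sum_right)
    also have "\<dots> = v" using F2[OF fin sig al] F3[OF fin sig al] by simp
    finally have us: "(\<Sum>x\<in>insert \<alpha> \<sigma>. u x *\<^sub>R x) = v" .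
    have "(\<Sum>x\<in>\<kappa>. u x *\<^sub>R x) = (\<Sum>x\<in>insert \<alpha> \<sigma>. u x *\<^sub>R x)"
    proof (intro sum.mono_neutral_left ftau ksub ballI)
      fix x assume x: "x \<in> insert \<alpha> \<sigma> - \<kappa>"
      then have "x \<in> (\<sigma> - S0) - K" "x \<in> \<sigma>" by (auto simp: \<kappa>_def S0_def)
      then have "?t x = 0" "lam \<sigma> \<alpha> x = 0" using h ls by (auto simp: S0_def)
      then show "u x *\<^sub>R x = 0" by (simp add: u_def)
    qed
    then have vs: "v = (\<Sum>x\<in>\<kappa>. u x *\<^sub>R x)" using us by simp
    have "\<forall>x\<in>\<kappa>. u x \<ge> 0"
    proof
      fix x assume x: "x \<in> \<kappa>"
      show "u x \<ge> 0"
      proof (cases "x = \<alpha>")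
        case True
        then show ?thesis using la rep_al[OF fin sig al] M0 by (simp add: u_def)
      next
        case False
        show ?thesis
        proof (cases "x \<in> S0")
          case True
          then have xs: "x \<in> \<sigma>" "?c x < 0" using neg by (auto simp: S0_def)
          have le: "\<bar>?t x\<bar> / \<bar>?c x\<bar> \<le> M" unfolding M_def using fS0 True
            by (intro member_le_sum) auto
          have cpos: "\<bar>?c x\<bar> > 0" using xs by simp
          have "\<bar>?t x\<bar> \<le> M * \<bar>?c x\<bar>" using iffD1[OF pos_divide_le_eq[OF cpos] le] .
          then show ?thesis using xs ls[OF xs(1)] by (simp add: u_def abs_if split: if_splits)
        next
          case False
          then have "x \<in> K" using x \<open>x \<noteq> \<alpha>\<close> by (auto simp: \<kappa>_def)
          then have "x \<in> \<sigma>" "?c x = 0" "?t x \<ge> 0" using K h by (auto simp: S0_def)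
          then show ?thesis using ls by (simp add: u_def)
        qed
      qed
    qed
    then show "v \<in> pcone \<kappa>" unfolding pcone_def using vs by blast
  qed
  then show ?thesis unfolding \<kappa>_def S0_def .
qed

lemma P5:
  assumes anz: "\<alpha> \<noteq> 0" and K: "K \<subseteq> \<sigma> - {\<beta>\<in>\<sigma>. representation \<sigma> \<alpha> \<beta> \<noteq> 0}"
  shows "contains_line (pcone (insert \<alpha> {\<beta>\<in>\<sigma>. representation \<sigma> \<alpha> \<beta> \<noteq> 0} \<union> K))"
  unfolding contains_line_def
proof (intro exI conjI allI)
  show "\<alpha> \<noteq> 0" by fact
  fix r :: real
  note bs = bases_facts[OF sig fin]
  have rep: "representation \<sigma> (r *\<^sub>R \<alpha>) = (\<lambda>b. r * representation \<sigma> \<alpha> b)"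
    using bs by (intro representation_scale) auto
  show "0 + r *\<^sub>R \<alpha> \<in> pcone (insert \<alpha> {\<beta>\<in>\<sigma>. representation \<sigma> \<alpha> \<beta> \<noteq> 0} \<union> K)"
    using P4[OF K, of "r *\<^sub>R \<alpha>"] K unfolding rep by auto
qed

lemma P6:
  assumes preg: "p \<in> Vreg \<Delta>"
  shows "(if Gc \<sigma> \<alpha> p v then 1 else (0::int)) =
    (\<Sum>T\<in>Pow {x\<in>\<sigma> - {\<beta>\<in>\<sigma>. representation \<sigma> \<alpha> \<beta> \<noteq> 0}. representation \<sigma> p x < 0}.
       (-1) ^ card T * indicator (pcone (insert \<alpha> {\<beta>\<in>\<sigma>. representation \<sigma> \<alpha> \<beta> \<noteq> 0} \<union> ((\<sigma> - {\<beta>\<in>\<sigma>. representation \<sigma> \<alpha> \<beta> \<noteq> 0}) - T))) v)"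
proof -
  define S0 where "S0 = {\<beta>\<in>\<sigma>. representation \<sigma> \<alpha> \<beta> \<noteq> 0}"
  define \<rho> where "\<rho> = \<sigma> - S0"
  define N where "N = {x\<in>\<rho>. representation \<sigma> p x < 0}"
  let ?t = "representation \<sigma> v" and ?q = "representation \<sigma> p"
  define A where "A \<longleftrightarrow> (\<forall>x\<in>\<rho>. ?t x \<ge> 0)"
  define Z where "Z = {x\<in>N. ?t x = 0}"
  have fs: "finite \<sigma>" using bases_facts[OF sig fin] by simp
  have fN: "finite N" using fs by (simp add: N_def \<rho>_def)
  have fZ: "finite Z" using fN by (simp add: Z_def)
  have qnz: "x \<in> \<sigma> \<Longrightarrow> ?q x \<noteq> 0" for x using rep_nonzero[OF sig fin preg] by blast
  have G: "Gc \<sigma> \<alpha> p v \<longleftrightarrow> A \<and> Z = {}"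
  proof -
    have "Gc \<sigma> \<alpha> p v \<longleftrightarrow> (\<forall>x\<in>\<rho>. (?q x > 0 \<longrightarrow> ?t x \<ge> 0) \<and> (?q x < 0 \<longrightarrow> ?t x > 0))"
      by (simp add: Gc_def \<rho>_def S0_def)
    also have "\<dots> \<longleftrightarrow> A \<and> Z = {}"
    proof
      assume h: "\<forall>x\<in>\<rho>. (?q x > 0 \<longrightarrow> ?t x \<ge> 0) \<and> (?q x < 0 \<longrightarrow> ?t x > 0)"
      have "A"
        unfolding A_def
      proof
        fix x assume x: "x \<in> \<rho>"
        then have "?q x \<noteq> 0" using qnz by (simp add: \<rho>_def)
        then show "?t x \<ge> 0" using h x by (cases "?q x > 0") auto
      qed
      moreover have "Z = {}" using h by (auto simp: Z_def N_def)
      ultimately show "A \<and> Z = {}" by simp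
    next
      assume h: "A \<and> Z = {}"
      show "\<forall>x\<in>\<rho>. (?q x > 0 \<longrightarrow> ?t x \<ge> 0) \<and> (?q x < 0 \<longrightarrow> ?t x > 0)"
      proof
        fix x assume x: "x \<in> \<rho>"
        have "?t x \<ge> 0" using h x by (simp add: A_def)
        moreover have "?q x < 0 \<longrightarrow> ?t x \<noteq> 0" using h x by (auto simp: Z_def N_def)
        ultimately show "(?q x > 0 \<longrightarrow> ?t x \<ge> 0) \<and> (?q x < 0 \<longrightarrow> ?t x > 0)" by auto
      qed
    qed
    finally show ?thesis .
  qed
  have ind: "indicator (pcone (insert \<alpha> S0 \<union> (\<rho> - T))) v = (if A \<and> T \<subseteq> Z then 1 else (0::int))"
    if T: "T \<in> Pow N" for T
  proof -
    have TN: "T \<subseteq> N" using T by simp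
    have Tr: "T \<subseteq> \<rho>" using TN by (auto simp: N_def)
    have K: "\<rho> - T \<subseteq> \<sigma> - {\<beta>\<in>\<sigma>. representation \<sigma> \<alpha> \<beta> \<noteq> 0}" by (auto simp: \<rho>_def S0_def)
    have e: "(\<sigma> - {\<beta>\<in>\<sigma>. representation \<sigma> \<alpha> \<beta> \<noteq> 0}) - (\<rho> - T) = T" using Tr by (auto simp: \<rho>_def S0_def)
    have "v \<in> pcone (insert \<alpha> S0 \<union> (\<rho> - T)) \<longleftrightarrow> (\<forall>x\<in>\<rho> - T. ?t x \<ge> 0) \<and> (\<forall>x\<in>T. ?t x = 0)"
      using P4[OF K, of v] unfolding e S0_def by simp
    also have "\<dots> \<longleftrightarrow> A \<and> T \<subseteq> Z" using TN Tr by (auto simp: A_def Z_def)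
    finally show ?thesis by (simp add: indicator_def)
  qed
  have "(\<Sum>T\<in>Pow N. (-1) ^ card T * indicator (pcone (insert \<alpha> S0 \<union> (\<rho> - T))) v)
      = (\<Sum>T\<in>Pow N. (if A \<and> T \<subseteq> Z then (-1::int) ^ card T else 0))"
  proof (intro sum.cong refl)
    fix T assume "T \<in> Pow N"
    then show "(-1) ^ card T * indicator (pcone (insert \<alpha> S0 \<union> (\<rho> - T))) v = (if A \<and> T \<subseteq> Z then (-1::int) ^ card T else 0)"
      unfolding ind[OF \<open>T \<in> Pow N\<close>] by simp
  qed
  also have "\<dots> = (if A then (\<Sum>T\<in>Pow Z. (-1::int) ^ card T) else 0)"
  proof (cases A)
    case True
    have "Z \<subseteq> N" by (auto simp: Z_def)
    then have "(\<Sum>T\<in>Pow N. (if A \<and> T \<subseteq> Z then (-1::int) ^ card T else 0)) = (\<Sum>T\<in>Pow Z. (-1::int) ^ card T)"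
      using fN True by (intro sum.mono_neutral_cong_right) auto
    then show ?thesis using True by simp
  qed simp
  also have "(if A then (\<Sum>T\<in>Pow Z. (-1::int) ^ card T) else 0) = (if Gc \<sigma> \<alpha> p v then 1 else 0)"
    using alt_pow[OF fZ] G by simp
  finally show ?thesis unfolding N_def \<rho>_def S0_def by simp
qed

end



theorem mainTheorem17:
  fixes \<Delta> :: "'a::euclidean_space set"
  assumes "finite \<Delta>" and "0 \<notin> \<Delta>" and "span \<Delta> = UNIV" and "uminus ` \<Delta> = \<Delta>"
    and "\<gamma> \<in> components (Vreg \<Delta>)"
    and "\<sigma> \<in> bases \<Delta>" and "\<alpha> \<in> \<Delta> - \<sigma>"
  shows "(\<lambda>v. A_gamma \<gamma> \<sigma> v
            - (\<Sum>\<beta>\<in>{\<beta>\<in>\<sigma>. representation \<sigma> \<alpha> \<beta> \<noteq> 0}.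
                 sign_int (representation \<sigma> \<alpha> \<beta>) * A_gamma \<gamma> (insert \<alpha> \<sigma> - {\<beta>}) v))
         \<in> LC \<Delta>"
proof -
  note fin = assms(1) and sig = assms(6) and al = assms(7)
  define p where "p = (SOME p. p \<in> \<gamma>)"
  have "\<gamma> \<noteq> {}" using in_components_nonempty[OF assms(5)] .
  then have pg: "p \<in> \<gamma>" unfolding p_def by (metis ex_in_conv someI_ex)
  have preg: "p \<in> Vreg \<Delta>" using in_components_subset[OF assms(5)] pg by blast
  have AG: "A_gamma \<gamma> s = indicator (cone_p s p)" for s by (simp add: A_gamma_def cone_gamma_def p_def)
  have D: "(\<lambda>v. A_gamma \<gamma> \<sigma> v
            - (\<Sum>\<beta>\<in>{\<beta>\<in>\<sigma>. representation \<sigma> \<alpha> \<beta> \<noteq> 0}.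
                 sign_int (representation \<sigma> \<alpha> \<beta>) * A_gamma \<gamma> (insert \<alpha> \<sigma> - {\<beta>}) v))
     = (\<lambda>v. if Gc \<sigma> \<alpha> p v \<and> (\<forall>x\<in>{y\<in>insert \<alpha> \<sigma>. lam \<sigma> \<alpha> y \<noteq> 0}. lam \<sigma> \<alpha> x < 0) then 1 else 0)"
    unfolding AG using P3[OF fin sig al preg] by simp
  show ?thesis
  proof (cases "\<forall>x\<in>{y\<in>insert \<alpha> \<sigma>. lam \<sigma> \<alpha> y \<noteq> 0}. lam \<sigma> \<alpha> x < 0")
    case False
    then have "(\<lambda>v. if Gc \<sigma> \<alpha> p v \<and> (\<forall>x\<in>{y\<in>insert \<alpha> \<sigma>. lam \<sigma> \<alpha> y \<noteq> 0}. lam \<sigma> \<alpha> x < 0) then 1 else (0::int)) = (\<lambda>v. 0)"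
      by (intro ext if_not_P) (use False in blast)
    then show ?thesis unfolding D using LC_zero by metis
  next
    case True
    have neg: "\<forall>\<beta>\<in>\<sigma>. representation \<sigma> \<alpha> \<beta> \<noteq> 0 \<longrightarrow> representation \<sigma> \<alpha> \<beta> < 0"
      using True lam_sig[OF fin sig al] by auto
    have anz: "\<alpha> \<noteq> 0" using assms(2) al by auto
    define S0 where "S0 = {\<beta>\<in>\<sigma>. representation \<sigma> \<alpha> \<beta> \<noteq> 0}"
    define N where "N = {x\<in>\<sigma> - S0. representation \<sigma> p x < 0}"
    have fs: "finite \<sigma>" using bases_facts[OF sig fin] by simp
    have fN: "finite (Pow N)" using fs by (simp add: N_def)
    have E: "(\<lambda>v. if Gc \<sigma> \<alpha> p v \<and> (\<forall>x\<in>{y\<in>insert \<alpha> \<sigma>. lam \<sigma> \<alpha> y \<noteq> 0}. lam \<sigma> \<alpha> x < 0) then 1 else(0::int))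
       = (\<lambda>v. \<Sum>T\<in>Pow N. (-1) ^ card T * indicator (pcone (insert \<alpha> S0 \<union> ((\<sigma> - S0) - T))) v)"
    proof (rule ext)
      fix v
      have eq: "(Gc \<sigma> \<alpha> p v \<and> (\<forall>x\<in>{y\<in>insert \<alpha> \<sigma>. lam \<sigma> \<alpha> y \<noteq> 0}. lam \<sigma> \<alpha> x < 0)) \<longleftrightarrow> Gc \<sigma> \<alpha> p v"
        using True by blast
      show "(if Gc \<sigma> \<alpha> p v \<and> (\<forall>x\<in>{y\<in>insert \<alpha> \<sigma>. lam \<sigma> \<alpha> y \<noteq> 0}. lam \<sigma> \<alpha> x < 0) then 1 else (0::int))
       = (\<Sum>T\<in>Pow N. (-1) ^ card T * indicator (pcone (insert \<alpha> S0 \<union> ((\<sigma> - S0) - T))) v)"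
        unfolding eq N_def S0_def by (rule P6[OF fin sig al neg preg])
    qed
    have "(\<lambda>v. \<Sum>T\<in>Pow N. (-1) ^ card T * indicator (pcone (insert \<alpha> S0 \<union> ((\<sigma> - S0) - T))) v) \<in> LC \<Delta>"
    proof (rule LC_sum[OF fN])
      fix T assume "T \<in> Pow N"
      have sub: "insert \<alpha> S0 \<union> ((\<sigma> - S0) - T) \<subseteq> \<Delta>" using al bases_facts[OF sig fin] by (auto simp: S0_def)
      have K: "(\<sigma> - S0) - T \<subseteq> \<sigma> - {\<beta>\<in>\<sigma>. representation \<sigma> \<alpha> \<beta> \<noteq> 0}" by (auto simp: S0_def)
      have cl: "contains_line (pcone (insert \<alpha> S0 \<union> ((\<sigma> - S0) - T)))"
        using P5[OF fin sig al neg anz K] unfolding S0_def .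
      show "(\<lambda>v. (-1) ^ card T * indicator (pcone (insert \<alpha> S0 \<union> ((\<sigma> - S0) - T))) v) \<in> LC \<Delta>"
        by (rule LC_scale[OF LC_gen[OF fin sub cl]])
    qed
    then show ?thesis unfolding D E .
  qed
qed


end
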